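(* Let $\mathcal{G}$ be a $k$-uniform hypergraph with $n$ vertices. Then \[ {\rm bw}(\mathcal{G}) \geq\frac{n+(-1)^n}{k(n+1)}\sum_{j = 1}^n \alpha _j(\mathcal{G}). \]
   Context: A $k$-uniform hypergraph $\mathcal{G}$ has vertex set $V(\mathcal{G})=[n]$ and edge set $E(\mathcal{G})$ of $k$-element subsets of $V(\mathcal{G})$. For $\mathbf{x}\in\mathbb{R}^n$, $\mathcal{L}_\mathcal{G}\mathbf{x}^k=\sum_{\{i_1,\ldots,i_k\}\in E(\mathcal{G})}\left(x_{i_1}^k+\cdots+x_{i_k}^k-k\,x_{i_1}\cdots x_{i_k}\right)$. The inverse Perron value of vertex $j$ is $\alpha_j(\mathcal{G})=\min\{\mathcal{L}_\mathcal{G}\mathbf{x}^k : \mathbf{x}\in\mathbb{R}^n_+,\ \sum_{i=1}^n x_i^k=1,\ x_j=0\}$ ($\mathbb{R}^n_+$ = nonnegative vectors). For $S\subseteq V(\mathcal{G})$ with complement $\overline{S}=V(\mathcal{G})\setminus S$, $E(S,\overline{S})$ is the set of edges containing vertices of both $S$ and $\overline{S}$. The bipartition width is ${\rm bw}(\mathcal{G})=\min\{|E(S,\overline{S})| : S\subseteq V(\mathcal{G}),\ |S|=\lfloor n/2\rfloor\}$. *)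

theory Defs
  imports "HOL-Analysis.Analysis"
begin

definition uniform_hypergraph :: "nat \<Rightarrow> nat \<Rightarrow> nat set set \<Rightarrow> bool" where
  "uniform_hypergraph n k E \<longleftrightarrow> (\<forall>e\<in>E. e \<subseteq> {1..n} \<and> card e = k)"

definition lap_form :: "nat \<Rightarrow> nat set set \<Rightarrow> (nat \<Rightarrow> real) \<Rightarrow> real" where
  "lap_form k E x = (\<Sum>e\<in>E. (\<Sum>i\<in>e. x i ^ k) - real k * (\<Prod>i\<in>e. x i))"

text \<open>Inverse Perron value of vertex j (a minimum; stated as the infimum of the value set,
  which is attained by compactness).\<close>
definition inv_perron :: "nat \<Rightarrow> nat \<Rightarrow> nat set set \<Rightarrow> nat \<Rightarrow> real" where
  "inv_perron n k E j = Inf {lap_form k E x | x.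
       (\<forall>i\<in>{1..n}. x i \<ge> 0) \<and> (\<forall>i. i \<notin> {1..n} \<longrightarrow> x i = 0) \<and>
       (\<Sum>i=1..n. x i ^ k) = 1 \<and> x j = 0}"

definition cut_edges :: "nat \<Rightarrow> nat set set \<Rightarrow> nat set \<Rightarrow> nat set set" where
  "cut_edges n E S = {e\<in>E. e \<inter> S \<noteq> {} \<and> e \<inter> ({1..n} - S) \<noteq> {}}"

definition bip_width :: "nat \<Rightarrow> nat set set \<Rightarrow> nat" where
  "bip_width n E = Min {card (cut_edges n E S) | S. S \<subseteq> {1..n} \<and> card S = n div 2}"

end

theory Submission
  imports Defs
begin

lemma x_le_one:
  fixes x :: real
  assumes "0 \<le> x" "x ^ k \<le> 1" "k > 0"
  shows "x \<le> 1"
proof (rule ccontr)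
  assume "\<not> x \<le> 1"
  then have "1 < x ^ k" using assms by (simp add: one_less_power)
  then show False using assms by simp
qed

lemma lap_bdd:
  assumes unif: "uniform_hypergraph n k E" and k: "k \<ge> 2"
  shows "bdd_below {lap_form k E x | x.
       (\<forall>i\<in>{1..n}. x i \<ge> 0) \<and> (\<forall>i. i \<notin> {1..n} \<longrightarrow> x i = 0) \<and>
       (\<Sum>i=1..n. x i ^ k) = 1 \<and> x j = 0}"
proof -
  have finE: "finite E"
  proof -
    have "E \<subseteq> Pow {1..n}" using unif unfolding uniform_hypergraph_def by auto
    then show ?thesis by (rule finite_subset) simp
  qed
  show ?thesis
  proof (rule bdd_belowI[where m = "- (real k * real (card E))"], clarify)
    fix x :: "nat \<Rightarrow> real"
    assume nn: "\<forall>i\<in>{1..n}. 0 \<le> x i" and z: "\<forall>i. i \<notin> {1..n} \<longrightarrow> x i = 0"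
      and s: "(\<Sum>i = 1..n. x i ^ k) = 1"
    have le1: "x i \<le> 1" if "i \<in> {1..n}" for i
    proof -
      have "x i ^ k \<le> (\<Sum>i = 1..n. x i ^ k)"
        by (rule member_le_sum) (use that nn in auto)
      then show ?thesis using x_le_one[of "x i" k] nn that s k by auto
    qed
    have "(\<Sum>e\<in>E. - real k) \<le> lap_form k E x"
      unfolding lap_form_def
    proof (rule sum_mono)
      fix e assume e: "e \<in> E"
      then have sub: "e \<subseteq> {1..n}" using unif unfolding uniform_hypergraph_def by auto
      have "(\<Prod>i\<in>e. x i) \<le> 1"
        by (rule prod_le_1) (use sub nn le1 in auto)
      moreover have "0 \<le> (\<Sum>i\<in>e. x i ^ k)"
        by (rule sum_nonneg) (use sub nn in auto)
      ultimately show "- real k \<le> (\<Sum>i\<in>e. x i ^ k) - real k * (\<Prod>i\<in>e. x i)"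
      proof -
        have "real k * (\<Prod>i\<in>e. x i) \<le> real k * 1" by (rule mult_left_mono) (use \<open>(\<Prod>i\<in>e. x i) \<le> 1\<close> in auto)
        then show ?thesis using \<open>0 \<le> (\<Sum>i\<in>e. x i ^ k)\<close> by linarith
      qed
    qed
    then show "- (real k * real (card E)) \<le> lap_form k E x" by (simp add: mult.commute)
  qed
qed

lemma test_bound:
  assumes unif: "uniform_hypergraph n k E" and k: "k \<ge> 2"
    and T: "T \<subseteq> {1..n}" "T \<noteq> {}" and j: "j \<notin> T"
  shows "inv_perron n k E j \<le> (\<Sum>e\<in>cut_edges n E T. real (card (e \<inter> T))) / real (card T)"
proof -
  have finT: "finite T" using T finite_subset by blast
  have cT: "card T > 0" using finT T by auto
  have finE: "finite E"
  proof -
    have "E \<subseteq> Pow {1..n}" using unif unfolding uniform_hypergraph_def by auto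
    then show ?thesis by (rule finite_subset) simp
  qed
  define c where "c = root k (1 / real (card T))"
  have c0: "c \<ge> 0" unfolding c_def by (simp add: real_root_ge_zero)
  have ck: "c ^ k = 1 / real (card T)" unfolding c_def using k by (simp add: real_root_pow_pos2)
  define x where "x = (\<lambda>i. if i \<in> T then c else 0)"
  have xk: "x i ^ k = (if i \<in> T then 1 / real (card T) else 0)" for i
    using k ck by (simp add: x_def)
  have sumA: "(\<Sum>i\<in>A. x i ^ k) = real (card (A \<inter> T)) / real (card T)" if "finite A" for A
  proof -
    have "(\<Sum>i\<in>A. x i ^ k) = (\<Sum>i\<in>A. if i \<in> T then 1 / real (card T) else 0)"
      by (simp add: xk)
    also have "\<dots> = (\<Sum>i\<in>A \<inter> T. 1 / real (card T))"
      using sum.inter_restrict[OF that, of "\<lambda>_. 1 / real (card T)" T] by simp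
    finally show ?thesis by simp
  qed
  have mem: "lap_form k E x \<in> {lap_form k E x | x.
       (\<forall>i\<in>{1..n}. x i \<ge> 0) \<and> (\<forall>i. i \<notin> {1..n} \<longrightarrow> x i = 0) \<and>
       (\<Sum>i=1..n. x i ^ k) = 1 \<and> x j = 0}"
  proof -
    have "(\<Sum>i=1..n. x i ^ k) = 1"
      using sumA[of "{1..n}"] T cT by (simp add: Int_absorb1)
    moreover have "\<forall>i. i \<notin> {1..n} \<longrightarrow> x i = 0" using T by (auto simp: x_def)
    moreover have "\<forall>i\<in>{1..n}. x i \<ge> 0" using c0 by (auto simp: x_def)
    moreover have "x j = 0" using j by (simp add: x_def)
    ultimately show ?thesis by (intro CollectI exI[of _ x]) simp
  qed
  have hterm: "(\<Sum>i\<in>e. x i ^ k) - real k * (\<Prod>i\<in>e. x i)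
      = (if e \<in> cut_edges n E T then real (card (e \<inter> T)) / real (card T) else 0)"
    if e: "e \<in> E" for e
  proof -
    have sub: "e \<subseteq> {1..n}" and ce: "card e = k"
      using unif e unfolding uniform_hypergraph_def by auto
    have fe: "finite e" using sub by (rule finite_subset) simp
    have ne: "e \<noteq> {}" using ce k by auto
    show ?thesis
    proof (cases "e \<subseteq> T")
      case True
      have "(\<Prod>i\<in>e. x i) = (\<Prod>i\<in>e. c)" by (rule prod.cong) (use True in \<open>auto simp: x_def\<close>)
      then have "(\<Prod>i\<in>e. x i) = 1 / real (card T)" using ce ck by simp
      moreover have "e \<inter> T = e" using True by auto
      moreover have "e \<notin> cut_edges n E T" using True unfolding cut_edges_def by auto
      ultimately show ?thesis using sumA[OF fe] ce by simp
    next
      case False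
      then obtain i where i: "i \<in> e" "i \<notin> T" by auto
      have "(\<Prod>i\<in>e. x i) = 0" by (rule prod_zero[OF fe]) (use i in \<open>auto simp: x_def\<close>)
      moreover have "e \<inter> T = {} \<or> e \<in> cut_edges n E T"
        using i sub e unfolding cut_edges_def by auto
      ultimately show ?thesis using sumA[OF fe] by auto
    qed
  qed
  have "lap_form k E x = (\<Sum>e\<in>E. if e \<in> cut_edges n E T then real (card (e \<inter> T)) / real (card T) else 0)"
    unfolding lap_form_def by (rule sum.cong) (auto simp: hterm)
  also have "\<dots> = (\<Sum>e\<in>E \<inter> cut_edges n E T. real (card (e \<inter> T)) / real (card T))"
    by (rule sum.inter_restrict[OF finE, symmetric])
  also have "E \<inter> cut_edges n E T = cut_edges n E T" unfolding cut_edges_def by auto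
  finally have lf: "lap_form k E x = (\<Sum>e\<in>cut_edges n E T. real (card (e \<inter> T))) / real (card T)"
    by (simp add: sum_divide_distrib)
  have "inv_perron n k E j \<le> lap_form k E x"
    unfolding inv_perron_def by (rule cInf_lower[OF mem lap_bdd[OF unif k]])
  then show ?thesis using lf by simp
qed

lemma aux_eq:
  fixes K P N X Q D :: real
  assumes "K > 0" "P > 0" "N \<ge> 0"
  shows "X / (K * (N + 1)) * (Q / P * (K * D)) = (X * Q) / ((N + 1) * P) * D"
proof -
  have "N + 1 \<noteq> 0" "K \<noteq> 0" "P \<noteq> 0" using assms by auto
  then show ?thesis by (simp add: divide_simps)
qed

theorem theorem3p2:
  fixes n k :: nat and E :: "nat set set"
  assumes "uniform_hypergraph n k E" and "k \<ge> 2" and "n \<ge> 2"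
  shows "real (bip_width n E) \<ge>
           (real n + (-1) ^ n) / (real k * (real n + 1)) * (\<Sum>j=1..n. inv_perron n k E j)"
proof -
  note unif = assms(1) and k = assms(2) and n2 = assms(3)
  define p where "p = n div 2"
  have p1: "p \<ge> 1" using n2 unfolding p_def by auto
  let ?F = "{card (cut_edges n E S) | S. S \<subseteq> {1..n} \<and> card S = n div 2}"
  have finF: "finite ?F"
  proof -
    have "?F \<subseteq> (\<lambda>S. card (cut_edges n E S)) ` Pow {1..n}" by auto
    then show ?thesis using finite_subset by blast
  qed
  have "card {1..p} = n div 2" "{1..p} \<subseteq> {1..n}" using p_def by auto
  then have neF: "?F \<noteq> {}" by blast
  have "bip_width n E \<in> ?F" unfolding bip_width_def using Min_in[OF finF neF] .
  then obtain S where S: "S \<subseteq> {1..n}" "card S = p"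
    and bw: "bip_width n E = card (cut_edges n E S)" unfolding p_def by blast
  define T where "T = {1..n} - S"
  define q where "q = n - p"
  have cT: "card T = q" unfolding T_def q_def using S by (simp add: card_Diff_subset finite_subset)
  have pq: "p \<le> q" "q \<ge> 1" unfolding q_def p_def using n2 by auto
  have finS: "finite S" using S finite_subset by blast
  have finT: "finite T" unfolding T_def by simp
  define C where "C = cut_edges n E S"
  have CT: "cut_edges n E T = C"
    unfolding C_def cut_edges_def T_def using unif unfolding uniform_hypergraph_def by auto
  have finE: "finite E"
  proof -
    have "E \<subseteq> Pow {1..n}" using unif unfolding uniform_hypergraph_def by auto
    then show ?thesis by (rule finite_subset) simp
  qed
  have finC: "finite C" unfolding C_def cut_edges_def using finE by simp
  define A where "A = (\<Sum>e\<in>C. real (card (e \<inter> T)))"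
  define B where "B = (\<Sum>e\<in>C. real (card (e \<inter> S)))"
  have A0: "A \<ge> 0" "B \<ge> 0" unfolding A_def B_def by (auto intro: sum_nonneg)
  have AB: "A + B = real k * real (card C)"
  proof -
    have "A + B = (\<Sum>e\<in>C. real (card (e \<inter> T)) + real (card (e \<inter> S)))"
      unfolding A_def B_def by (simp add: sum.distrib)
    also have "\<dots> = (\<Sum>e\<in>C. real k)"
    proof (rule sum.cong)
      fix e assume "e \<in> C"
      then have e: "e \<in> E" unfolding C_def cut_edges_def by auto
      have sub: "e \<subseteq> {1..n}" and ce: "card e = k"
        using unif e unfolding uniform_hypergraph_def by auto
      have fe: "finite e" using sub finite_subset by blast
      have "e = (e \<inter> T) \<union> (e \<inter> S)" using sub unfolding T_def by auto
      moreover have "(e \<inter> T) \<inter> (e \<inter> S) = {}" unfolding T_def by auto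
      ultimately have "card e = card (e \<inter> T) + card (e \<inter> S)"
        using fe by (metis card_Un_disjoint finite_Int)
      then show "real (card (e \<inter> T)) + real (card (e \<inter> S)) = real k" using ce by simp
    qed simp
    finally show ?thesis by simp
  qed
  have bS: "inv_perron n k E j \<le> A / real q" if "j \<in> S" for j
  proof -
    have "T \<noteq> {}" using cT pq finT by auto
    then have "inv_perron n k E j \<le> (\<Sum>e\<in>cut_edges n E T. real (card (e \<inter> T))) / real (card T)"
      using test_bound[OF unif k, of T j] that unfolding T_def by auto
    then show ?thesis using CT cT unfolding A_def by simp
  qed
  have bT: "inv_perron n k E j \<le> B / real p" if "j \<in> T" for j
  proof -
    have "S \<noteq> {}" using S p1 by auto
    then have "inv_perron n k E j \<le> (\<Sum>e\<in>cut_edges n E S. real (card (e \<inter> S))) / real (card S)"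
      using test_bound[OF unif k, of S j] that S unfolding T_def by auto
    then show ?thesis using S unfolding B_def C_def by simp
  qed
  have split: "(\<Sum>j=1..n. inv_perron n k E j) = (\<Sum>j\<in>S. inv_perron n k E j) + (\<Sum>j\<in>T. inv_perron n k E j)"
  proof -
    have "{1..n} = S \<union> T" "S \<inter> T = {}" using S unfolding T_def by auto
    then show ?thesis using sum.union_disjoint[OF finS finT] by metis
  qed
  have "(\<Sum>j\<in>S. inv_perron n k E j) \<le> (\<Sum>j\<in>S. A / real q)" by (rule sum_mono) (rule bS)
  moreover have "(\<Sum>j\<in>T. inv_perron n k E j) \<le> (\<Sum>j\<in>T. B / real p)" by (rule sum_mono) (rule bT)
  ultimately have s1: "(\<Sum>j=1..n. inv_perron n k E j) \<le> real p * (A / real q) + real q * (B / real p)"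
    using split S cT by simp
  have "real p * (A / real q) \<le> real q * (A / real p)"
  proof -
    have "real p * real p \<le> real q * real q" using pq by (simp add: mult_mono)
    then have "real p * real p * A \<le> real q * real q * A" using A0 by (simp add: mult_right_mono)
    then show ?thesis using pq p1 by (simp add: field_simps)
  qed
  moreover have "real q / real p * (A + B) = real q * (A / real p) + real q * (B / real p)"
    using p1 by (simp add: field_simps)
  ultimately have "real p * (A / real q) + real q * (B / real p) \<le> real q / real p * (A + B)"
    by linarith
  then have s2: "(\<Sum>j=1..n. inv_perron n k E j) \<le> real q / real p * (real k * real (card C))"
  proof -
    have "real p * (A / real q) + real q * (B / real p) \<le> real q / real p * (real k * real (card C))"
      using \<open>real p * (A / real q) + real q * (B / real p) \<le> real q / real p * (A + B)\<close> AB by simp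
    then show ?thesis using s1 by linarith
  qed
  have key: "(real n + (-1) ^ n) * real q \<le> (real n + 1) * real p"
  proof (cases "even n")
    case True
    then have "n = 2 * p" "q = p" unfolding p_def q_def by auto
    then show ?thesis using True by simp
  next
    case False
    then have "n = 2 * p + 1" "q = p + 1" unfolding p_def q_def by presburger+
    then show ?thesis using False by (simp add: algebra_simps)
  qed
  have fpos: "(real n + (-1) ^ n) / (real k * (real n + 1)) \<ge> 0"
  proof -
    have "(-1::real) ^ n \<ge> -1" by (cases "even n") auto
    then show ?thesis using n2 k by (intro divide_nonneg_pos) auto
  qed
  have "(real n + (-1) ^ n) / (real k * (real n + 1)) * (\<Sum>j=1..n. inv_perron n k E j)
      \<le> (real n + (-1) ^ n) / (real k * (real n + 1)) * (real q / real p * (real k * real (card C)))"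
    by (rule mult_left_mono[OF s2 fpos])
  also have "\<dots> = ((real n + (-1) ^ n) * real q) / ((real n + 1) * real p) * real (card C)"
    using aux_eq[of "real k" "real p" "real n" "real n + (-1) ^ n" "real q" "real (card C)"] k p1 by simp
  also have "\<dots> \<le> 1 * real (card C)"
  proof (rule mult_right_mono)
    show "((real n + (-1) ^ n) * real q) / ((real n + 1) * real p) \<le> 1"
      using key p1 by (simp add: divide_le_eq_1)
  qed simp
  finally show ?thesis using bw unfolding C_def by simp
qed

end
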